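(* Let $r_1 \ge 2$ and $x_1 \ge 1$ be integers, let $d = x_1 + r_1 - 1$, and let $\mathbf{q} = (q_1,\ldots,q_d) \in \mathbb{Z}^d$ be the vector whose first $x_1$ entries equal $r_1$ and whose last $r_1 - 1$ entries equal $1 + r_1 x_1$. Let $\Delta_{(1,\mathbf{q})} = \mathrm{conv}\{\mathbf{e}_1,\ldots,\mathbf{e}_d, -\mathbf{q}\} \subset \mathbb{R}^d$. Define $\mathbf{a}'_{r_1+1} = ((-1)^{x_1}, (-x_1)^{r_1-1})$, $\mathbf{a}'_{r_1+2} = (0^{x_1}, (-1)^{r_1-1})$, $\mathbf{a}'_{r_1+3} = \mathbf{0}$, $\mathbf{a}'_i = (r_1 - i + 1)\mathbf{a}'_{r_1+1} + \mathbf{a}'_{r_1+2}$ for $1 \le i \le r_1$, and $\mathbf{b}'_j = \mathbf{e}_{d-j+1}$ for $1 \le j \le d$, and let $\mathcal{A}' = \{\mathbf{a}'_1,\ldots,\mathbf{a}'_{r_1+3},\mathbf{b}'_1,\ldots,\mathbf{b}'_d\}$. Then $\Delta_{(1,\mathbf{q})} \cap \mathbb{Z}^d = \mathcal{A}'$.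
   Context: $\mathbf{e}_i$ is the $i$-th standard basis vector of $\mathbb{R}^d$. The notation $(c_1^{y_1}, c_2^{y_2})$ denotes the vector consisting of $y_1$ copies of $c_1$ followed by $y_2$ copies of $c_2$. (These simplices are exactly the reflexive, integer-decomposition-property simplices $\Delta_{(1,\mathbf{q})}$ with $\mathbf{q}$ having two distinct parts and smallest part $r_1>1$.) *)

theory Defs
  imports "HOL-Analysis.Analysis"
begin

text \<open>Points of R^d are modelled as functions nat => real supported on the
coordinates 1..d; lattice points as functions nat => int supported on 1..d.\<close>

definition fin_conv_hull :: "(nat \<Rightarrow> real) set \<Rightarrow> (nat \<Rightarrow> real) set" where
  "fin_conv_hull V = {p. \<exists>u. (\<forall>v\<in>V. 0 \<le> u v) \<and> sum u V = 1 \<and>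
                         p = (\<lambda>k. \<Sum>v\<in>V. u v * v k)}"

definition unit_vec :: "nat \<Rightarrow> nat \<Rightarrow> int" where
  "unit_vec i = (\<lambda>k. if k = i then 1 else 0)"

end

theory Submission imports Defs begin

lemma mult_if_delta': "(if P then (1::real) else 0) * x = (if P then x else 0)" by simp

lemma hull_char:
  fixes d :: nat and q z :: "nat \<Rightarrow> int"
  assumes qpos: "\<forall>k\<in>{1..d}. q k > 0" and qout: "\<forall>k. k \<notin> {1..d} \<longrightarrow> q k = 0"
  shows "(\<lambda>k. real_of_int (z k)) \<in> fin_conv_hull ((\<lambda>v k. real_of_int (v k)) `
                 ((\<lambda>i. unit_vec i) ` {1..d} \<union> {(\<lambda>k. - q k)}))
    \<longleftrightarrow> (\<forall>k. k \<notin> {1..d} \<longrightarrow> z k = 0) \<and> (\<exists>\<mu>::real. \<mu> \<ge> 0 \<and>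
          (\<forall>k\<in>{1..d}. real_of_int (z k) + \<mu> * real_of_int (q k) \<ge> 0) \<and>
          (\<Sum>k\<in>{1..d}. real_of_int (z k) + \<mu> * real_of_int (q k)) + \<mu> = 1)"
proof -
  define E where "E j = (\<lambda>k. real_of_int (unit_vec j k))" for j
  define P where "P = (\<lambda>k. - real_of_int (q k))"
  have V: "(\<lambda>v k. real_of_int (v k)) ` ((\<lambda>i. unit_vec i) ` {1..d} \<union> {(\<lambda>k. - q k)})
           = insert P (E ` {1..d})"
    by (auto simp: E_def P_def image_image)
  have Ek: "E j k = (if k = j then 1 else 0)" for j k by (simp add: E_def unit_vec_def)
  have inj: "inj_on E {1..d}"
  proof (rule inj_onI)
    fix i j assume "E i = E j"
    then have "E i i = E j i" by simp
    then show "i = j" by (simp add: Ek split: if_splits)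
  qed
  have Pn: "P \<notin> E ` {1..d}"
  proof
    assume "P \<in> E ` {1..d}"
    then obtain j where j: "j \<in> {1..d}" "P = E j" by auto
    then have "P j = E j j" by simp
    then have "- real_of_int (q j) = 1" by (simp add: P_def Ek)
    moreover have "q j > 0" using qpos j(1) by blast
    ultimately show False by simp
  qed
  have sumV: "(\<Sum>v\<in>insert P (E ` {1..d}). g v) = g P + (\<Sum>j\<in>{1..d}. g (E j))" for g :: "(nat \<Rightarrow> real) \<Rightarrow> real"
    using Pn inj by (simp add: sum.reindex)
  have delta: "(\<Sum>j\<in>{1..d}. f j * E j k) = (if k \<in> {1..d} then f k else 0)" for f :: "nat \<Rightarrow> real" and k
    by (simp add: Ek if_distrib cong: if_cong)
  show ?thesis
  proof
    assume "(\<lambda>k. real_of_int (z k)) \<in> fin_conv_hull ((\<lambda>v k. real_of_int (v k)) `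
                 ((\<lambda>i. unit_vec i) ` {1..d} \<union> {(\<lambda>k. - q k)}))"
    then obtain u where u0: "\<forall>v\<in>insert P (E ` {1..d}). 0 \<le> u v"
      and u1: "sum u (insert P (E ` {1..d})) = 1"
      and uz: "(\<lambda>k. real_of_int (z k)) = (\<lambda>k. \<Sum>v\<in>insert P (E ` {1..d}). u v * v k)"
      unfolding fin_conv_hull_def V by blast
    have zk: "real_of_int (z k) = u P * P k + (if k \<in> {1..d} then u (E k) else 0)" for k
    proof -
      have "real_of_int (z k) = (\<Sum>v\<in>insert P (E ` {1..d}). u v * v k)" using uz by meson
      also have "\<dots> = u P * P k + (\<Sum>j\<in>{1..d}. u (E j) * E j k)" by (rule sumV)
      finally show ?thesis using delta[of "\<lambda>j. u (E j)" k] by simp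
    qed
    have "\<forall>k. k \<notin> {1..d} \<longrightarrow> z k = 0"
    proof (intro allI impI)
      fix k assume "k \<notin> {1..d}"
      moreover have "q k = 0" using qout \<open>k \<notin> {1..d}\<close> by blast
      ultimately have "real_of_int (z k) = 0" using zk[of k] by (auto simp: P_def)
      then show "z k = 0" by simp
    qed
    moreover have "u P \<ge> 0" using u0 by simp
    moreover have ins: "real_of_int (z k) + u P * real_of_int (q k) = u (E k)" if "k \<in> {1..d}" for k
      using zk[of k] that by (simp add: P_def)
    moreover have "\<forall>k\<in>{1..d}. real_of_int (z k) + u P * real_of_int (q k) \<ge> 0"
      using ins u0 by simp
    moreover have "(\<Sum>k\<in>{1..d}. real_of_int (z k) + u P * real_of_int (q k)) + u P = 1"
    proof -
      have "(\<Sum>k\<in>{1..d}. real_of_int (z k) + u P * real_of_int (q k)) = (\<Sum>k\<in>{1..d}. u (E k))"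
        using ins by (rule sum.cong[OF refl])
      then show ?thesis using u1 sumV[of u] by simp
    qed
    ultimately show "(\<forall>k. k \<notin> {1..d} \<longrightarrow> z k = 0) \<and> (\<exists>\<mu>::real. \<mu> \<ge> 0 \<and>
          (\<forall>k\<in>{1..d}. real_of_int (z k) + \<mu> * real_of_int (q k) \<ge> 0) \<and>
          (\<Sum>k\<in>{1..d}. real_of_int (z k) + \<mu> * real_of_int (q k)) + \<mu> = 1)" by blast
  next
    assume "(\<forall>k. k \<notin> {1..d} \<longrightarrow> z k = 0) \<and> (\<exists>\<mu>::real. \<mu> \<ge> 0 \<and>
          (\<forall>k\<in>{1..d}. real_of_int (z k) + \<mu> * real_of_int (q k) \<ge> 0) \<and>
          (\<Sum>k\<in>{1..d}. real_of_int (z k) + \<mu> * real_of_int (q k)) + \<mu> = 1)"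
    then obtain \<mu> :: real where zout: "\<forall>k. k \<notin> {1..d} \<longrightarrow> z k = 0" and m0: "\<mu> \<ge> 0"
      and lam: "\<forall>k\<in>{1..d}. real_of_int (z k) + \<mu> * real_of_int (q k) \<ge> 0"
      and s1: "(\<Sum>k\<in>{1..d}. real_of_int (z k) + \<mu> * real_of_int (q k)) + \<mu> = 1" by blast
    define u where "u v = (if v = P then \<mu> else \<Sum>k\<in>{1..d}. v k * (real_of_int (z k) + \<mu> * real_of_int (q k)))" for v
    have uE: "u (E j) = real_of_int (z j) + \<mu> * real_of_int (q j)" if "j \<in> {1..d}" for j
    proof -
      have "E j \<noteq> P" using Pn that by auto
      then have "u (E j) = (\<Sum>k\<in>{1..d}. E j k * (real_of_int (z k) + \<mu> * real_of_int (q k)))"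
        by (simp add: u_def)
      also have "\<dots> = real_of_int (z j) + \<mu> * real_of_int (q j)"
        using that by (simp add: Ek mult_if_delta')
      finally show ?thesis .
    qed
    have uP: "u P = \<mu>" by (simp add: u_def)
    have "\<forall>v\<in>insert P (E ` {1..d}). 0 \<le> u v" using uE uP m0 lam by auto
    moreover have "sum u (insert P (E ` {1..d})) = 1"
      using sumV[of u] uP uE s1 by simp
    moreover have "(\<lambda>k. real_of_int (z k)) = (\<lambda>k. \<Sum>v\<in>insert P (E ` {1..d}). u v * v k)"
    proof
      fix k
      have "(\<Sum>v\<in>insert P (E ` {1..d}). u v * v k) = u P * P k + (\<Sum>j\<in>{1..d}. u (E j) * E j k)"
        by (rule sumV)
      also have "\<dots> = \<mu> * P k + (if k \<in> {1..d} then u (E k) else 0)" using delta[of "\<lambda>j. u (E j)" k] by (simp add: uP)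
      also have "\<dots> = real_of_int (z k)"
        using uE[of k] zout qout by (auto simp: P_def)
      finally show "real_of_int (z k) = (\<Sum>v\<in>insert P (E ` {1..d}). u v * v k)" by simp
    qed
    ultimately show "(\<lambda>k. real_of_int (z k)) \<in> fin_conv_hull ((\<lambda>v k. real_of_int (v k)) `
                 ((\<lambda>i. unit_vec i) ` {1..d} \<union> {(\<lambda>k. - q k)}))"
      unfolding fin_conv_hull_def V by blast
  qed
qed


lemma arith_core:
  fixes a b s R X :: int
  assumes R: "R \<ge> 1" and X: "X \<ge> 1" and s: "s \<ge> 0"
    and F1: "R * b \<ge> a + a * R*X - 1 + s" and F2: "b + s \<le> 1 + X * a"
  shows "(s = 0 \<and> ((2 \<le> a \<and> a \<le> R+1 \<and> b = a * X + 1) \<or> (a = 1 \<and> (b = X+1 \<or> b = X)) \<or> (a = 0 \<and> b = 1)))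
         \<or> (a \<le> 0 \<and> b \<le> 0)"
proof -
  have "R * b \<le> R * (1 + X * a - s)" using F2 R by (intro mult_left_mono) auto
  then have st: "a + s \<le> 1 + R - R * s" using F1 by (simp add: algebra_simps)
  consider "a \<ge> 2" | "a = 1" | "a \<le> 0" by linarith
  then show ?thesis
  proof cases
    case 1
    have s0: "s = 0"
    proof (rule ccontr)
      assume "s \<noteq> 0" then have "s \<ge> 1" using s by simp
      then have "R * s \<ge> R * 1" using R by (intro mult_left_mono) auto
      then show False using st 1 \<open>s \<ge> 1\<close> by linarith
    qed
    have "a * R*X < a + a * R*X - 1" using 1 by linarith
    then have "R * (a * X) < R * b" using F1 s0 by (simp add: algebra_simps)
    then have "a * X < b" using R by (simp add: mult_less_cancel_left)
    then have "b = a * X + 1" using F2 s0 by (simp add: algebra_simps)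
    then show ?thesis using s0 st 1 by simp
  next
    case 2
    then have F1': "R * b \<ge> R * X + s" using F1 by (simp add: algebra_simps)
    then have "R * X \<le> R * b" using s by linarith
    then have bX: "X \<le> b" using R by (simp add: mult_le_cancel_left)
    have s0: "s = 0"
    proof (rule ccontr)
      assume "s \<noteq> 0" then have "s \<ge> 1" using s by simp
      then have "b = X" using F2 2 bX by simp
      then show False using F1' \<open>s \<ge> 1\<close> by simp
    qed
    then show ?thesis using 2 bX F2 by auto
  next
    case 3
    have "X * a \<le> 0" using 3 X by (simp add: mult_nonneg_nonpos)
    then have b1: "b \<le> 1 - s" using F2 by linarith
    show ?thesis
    proof (cases "b \<ge> 1")
      case True
      then have "b = 1" "s = 0" using b1 s by auto
      then have "X * a \<ge> 0" using F2 by simp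
      then have "a \<ge> 0" using X by (simp add: zero_le_mult_iff)
      then show ?thesis using 3 \<open>b = 1\<close> \<open>s = 0\<close> by simp
    next
      case False then show ?thesis using 3 by simp
    qed
  qed
qed


lemma sum_split2:
  fixes f :: "nat \<Rightarrow> 'a::comm_monoid_add"
  assumes "x1 \<le> d"
  shows "sum f {1..d} = sum f {1..x1} + sum f {x1<..d}"
proof -
  have "{1..d} = {1..x1} \<union> {x1<..d}" using assms by auto
  moreover have "{1..x1} \<inter> {x1<..d} = {}" by auto
  ultimately show ?thesis by (simp add: sum.union_disjoint)
qed

lemma unit_or_zero:
  fixes z :: "nat \<Rightarrow> int"
  assumes zout: "\<forall>k. k \<notin> {1..d} \<longrightarrow> z k = 0" and nn: "\<forall>k\<in>{1..d}. z k \<ge> 0"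
    and S: "(\<Sum>k\<in>{1..d}. z k) \<le> 1"
  shows "z = (\<lambda>k. 0) \<or> (\<exists>j\<in>{1..d}. z = unit_vec j)"
proof (cases "\<forall>k\<in>{1..d}. z k = 0")
  case True
  then have "z = (\<lambda>k. 0)" using zout by (auto simp: fun_eq_iff)
  then show ?thesis by simp
next
  case False
  then obtain j where j: "j \<in> {1..d}" "z j \<noteq> 0" by blast
  then have zj: "z j \<ge> 1" using nn by force
  have rest: "(\<Sum>k\<in>{1..d} - {j}. z k) \<ge> 0" using nn by (intro sum_nonneg) auto
  have split: "(\<Sum>k\<in>{1..d}. z k) = z j + (\<Sum>k\<in>{1..d} - {j}. z k)"
    using j(1) by (simp add: sum.remove)
  have zj1: "z j = 1" using split rest S zj by linarith
  have "(\<Sum>k\<in>{1..d} - {j}. z k) = 0" using split rest S zj by linarith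
  then have z0: "\<forall>k\<in>{1..d} - {j}. z k = 0"
    using nn by (subst (asm) sum_nonneg_eq_0_iff) auto
  have "z = unit_vec j"
  proof
    fix k show "z k = unit_vec j k"
      using z0 zout zj1 by (cases "k \<in> {1..d}") (auto simp: unit_vec_def)
  qed
  then show ?thesis using j(1) by blast
qed

lemma lattice_sub:
  fixes r1 x1 d :: nat and z :: "nat \<Rightarrow> int" and \<mu> :: real
  assumes r1: "r1 \<ge> 2" and x1: "x1 \<ge> 1" and d: "d = x1 + r1 - 1"
    and zout: "\<forall>k. k \<notin> {1..d} \<longrightarrow> z k = 0" and m0: "\<mu> \<ge> 0"
    and c1: "\<forall>k\<in>{1..x1}. real_of_int (z k) + \<mu> * real r1 \<ge> 0"
    and c2: "\<forall>k\<in>{x1<..d}. real_of_int (z k) + \<mu> * (1 + real r1 * real x1) \<ge> 0"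
    and se: "real_of_int (\<Sum>k\<in>{1..d}. z k) + \<mu> * (real r1 * (1 + real r1 * real x1)) = 1"
  shows "(\<exists>m\<in>{1..r1}. z = (\<lambda>k. if 1 \<le> k \<and> k \<le> x1 then - int m
              else if x1 < k \<and> k \<le> d then -(int m * int x1 + 1) else 0))
     \<or> z = (\<lambda>k. if 1 \<le> k \<and> k \<le> x1 then -1 else if x1 < k \<and> k \<le> d then - int x1 else 0)
     \<or> z = (\<lambda>k. if x1 < k \<and> k \<le> d then -1 else 0)
     \<or> z = (\<lambda>k. 0) \<or> (\<exists>j\<in>{1..d}. z = unit_vec j)"
proof -
  define A1 where "A1 = {1..x1}"
  define A2 where "A2 = {x1<..d}"
  have fin: "finite A1" "finite A2" by (auto simp: A1_def A2_def)
  have ne: "A1 \<noteq> {}" "A2 \<noteq> {}" using x1 r1 d by (auto simp: A1_def A2_def)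
  define \<alpha> where "\<alpha> = Min (z ` A1)"
  define \<beta> where "\<beta> = Min (z ` A2)"
  have ale: "\<forall>k\<in>A1. \<alpha> \<le> z k" using fin by (auto simp: \<alpha>_def)
  have ble: "\<forall>k\<in>A2. \<beta> \<le> z k" using fin by (auto simp: \<beta>_def)
  have "\<alpha> \<in> z ` A1" unfolding \<alpha>_def using fin ne by (intro Min_in) auto
  then obtain k1 where k1: "k1 \<in> A1" "z k1 = \<alpha>" by auto
  have "\<beta> \<in> z ` A2" unfolding \<beta>_def using fin ne by (intro Min_in) auto
  then obtain k2 where k2: "k2 \<in> A2" "z k2 = \<beta>" by auto
  define s1 where "s1 = (\<Sum>k\<in>A1. z k - \<alpha>)"
  define s2 where "s2 = (\<Sum>k\<in>A2. z k - \<beta>)"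
  have s1nn: "s1 \<ge> 0" unfolding s1_def using ale by (intro sum_nonneg) auto
  have s2nn: "s2 \<ge> 0" unfolding s2_def using ble by (intro sum_nonneg) auto
  have cA1: "card A1 = x1" by (simp add: A1_def)
  have cA2: "card A2 = r1 - 1" using d by (simp add: A2_def)
  define S where "S = (\<Sum>k\<in>{1..d}. z k)"
  have "S = sum z A1 + sum z A2" unfolding S_def A1_def A2_def using d r1 by (intro sum_split2) simp
  moreover have "sum z A1 = s1 + int x1 * \<alpha>" unfolding s1_def by (simp add: sum_subtractf cA1)
  moreover have "sum z A2 = s2 + (int r1 - 1) * \<beta>" unfolding s2_def using r1 by (simp add: sum_subtractf cA2 of_nat_diff)
  ultimately have S: "S = int x1 * \<alpha> + (int r1 - 1) * \<beta> + s1 + s2" by simp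
  have ha: "real_of_int \<alpha> + \<mu> * real r1 \<ge> 0" using c1 k1 by (auto simp: A1_def)
  have hb: "real_of_int \<beta> + \<mu> * (1 + real r1 * real x1) \<ge> 0" using c2 k2 by (auto simp: A2_def)
  have rS: "real_of_int S = 1 - \<mu> * (real r1 * (1 + real r1 * real x1))" using se by (simp add: S_def)
  have I1: "\<alpha> * (1 + int r1 * int x1) + 1 - S \<ge> 0"
  proof -
    have "(real_of_int \<alpha> + \<mu> * real r1) * (1 + real r1 * real x1) \<ge> 0" using ha by simp
    also have "(real_of_int \<alpha> + \<mu> * real r1) * (1 + real r1 * real x1)
       = real_of_int (\<alpha> * (1 + int r1 * int x1) + 1 - S)" by (simp add: rS algebra_simps)
    finally show ?thesis by linarith
  qed
  have I2: "\<beta> * int r1 + 1 - S \<ge> 0"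
  proof -
    have "(real_of_int \<beta> + \<mu> * (1 + real r1 * real x1)) * real r1 \<ge> 0" using hb by simp
    also have "(real_of_int \<beta> + \<mu> * (1 + real r1 * real x1)) * real r1
       = real_of_int (\<beta> * int r1 + 1 - S)" by (simp add: rS algebra_simps)
    finally show ?thesis by linarith
  qed
  have I3: "S \<le> 1"
  proof -
    have "\<mu> * (real r1 * (1 + real r1 * real x1)) \<ge> 0" using m0 by simp
    then have "real_of_int S \<le> 1" using rS by linarith
    then show ?thesis by linarith
  qed
  define R where "R = int r1 - 1"
  have R1: "R \<ge> 1" using r1 by (simp add: R_def)
  have X1: "int x1 \<ge> 1" using x1 by simp
  have F1: "R * (-\<beta>) \<ge> (-\<alpha>) + (-\<alpha>) * R * int x1 - 1 + (s1 + s2)"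
    using I1 unfolding S R_def by (simp add: algebra_simps)
  have F2: "(-\<beta>) + (s1 + s2) \<le> 1 + int x1 * (-\<alpha>)"
    using I2 unfolding S R_def by (simp add: algebra_simps)
  have sn: "s1 + s2 \<ge> 0" using s1nn s2nn by simp
  note core0 = arith_core[OF R1 X1 sn F1 F2]
  have core: "(s1 + s2 = 0 \<and> 2 \<le> - \<alpha> \<and> - \<alpha> \<le> R + 1 \<and> - \<beta> = - \<alpha> * int x1 + 1)
     \<or> (s1 + s2 = 0 \<and> - \<alpha> = 1 \<and> - \<beta> = int x1 + 1)
     \<or> (s1 + s2 = 0 \<and> - \<alpha> = 1 \<and> - \<beta> = int x1)
     \<or> (s1 + s2 = 0 \<and> - \<alpha> = 0 \<and> - \<beta> = 1)
     \<or> (- \<alpha> \<le> 0 \<and> - \<beta> \<le> 0)" using core0 by blast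
  have blk: "z = (\<lambda>k. if 1 \<le> k \<and> k \<le> x1 then \<alpha> else if x1 < k \<and> k \<le> d then \<beta> else 0)"
    if "s1 + s2 = 0"
  proof -
    have "s1 = 0" "s2 = 0" using that s1nn s2nn by auto
    then have e1: "\<forall>k\<in>A1. z k = \<alpha>" and e2: "\<forall>k\<in>A2. z k = \<beta>"
      using ale ble fin unfolding s1_def s2_def
      by (subst (asm) sum_nonneg_eq_0_iff; auto)+
    show ?thesis
    proof
      fix k show "z k = (if 1 \<le> k \<and> k \<le> x1 then \<alpha> else if x1 < k \<and> k \<le> d then \<beta> else 0)"
        using e1 e2 zout by (auto simp: A1_def A2_def)
    qed
  qed
  from core show ?thesis
  proof (elim disjE conjE)
    assume s: "s1 + s2 = 0" and a: "2 \<le> - \<alpha>" "- \<alpha> \<le> R + 1" and b: "- \<beta> = - \<alpha> * int x1 + 1"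
    show ?thesis
    proof (intro disjI1 bexI)
      show "nat (-\<alpha>) \<in> {1..r1}" using a R_def by auto
      show "z = (\<lambda>k. if 1 \<le> k \<and> k \<le> x1 then - int (nat (-\<alpha>))
              else if x1 < k \<and> k \<le> d then -(int (nat (-\<alpha>)) * int x1 + 1) else 0)"
      proof -
        have n: "int (nat (-\<alpha>)) = -\<alpha>" using a by simp
        have bb: "-(-\<alpha> * int x1 + 1) = \<beta>" using b by simp
        show ?thesis unfolding n bb minus_minus by (rule blk[OF s])
      qed
    qed
  next
    assume s: "s1 + s2 = 0" and a: "- \<alpha> = 1" and b: "- \<beta> = int x1 + 1"
    show ?thesis
    proof (intro disjI1 bexI)
      show "nat (-\<alpha>) \<in> {1..r1}" using a r1 by auto
      show "z = (\<lambda>k. if 1 \<le> k \<and> k \<le> x1 then - int (nat (-\<alpha>))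
              else if x1 < k \<and> k \<le> d then -(int (nat (-\<alpha>)) * int x1 + 1) else 0)"
      proof -
        have n: "int (nat (-\<alpha>)) = -\<alpha>" using a by simp
        have bb: "-(-\<alpha> * int x1 + 1) = \<beta>" using a b by simp
        show ?thesis unfolding n bb minus_minus by (rule blk[OF s])
      qed
    qed
  next
    assume s: "s1 + s2 = 0" and a: "- \<alpha> = 1" and b: "- \<beta> = int x1"
    have ea: "\<alpha> = -1" and eb: "\<beta> = - int x1" using a b by simp_all
    have "z = (\<lambda>k. if 1 \<le> k \<and> k \<le> x1 then \<alpha> else if x1 < k \<and> k \<le> d then \<beta> else 0)"
      by (rule blk[OF s])
    then have "z = (\<lambda>k. if 1 \<le> k \<and> k \<le> x1 then -1 else if x1 < k \<and> k \<le> d then - int x1 else 0)"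
      unfolding ea eb by simp
    then show ?thesis by blast
  next
    assume s: "s1 + s2 = 0" and a: "- \<alpha> = 0" and b: "- \<beta> = 1"
    have "z = (\<lambda>k. if x1 < k \<and> k \<le> d then -1 else 0)"
      using blk[OF s] a b by (auto simp: fun_eq_iff)
    then show ?thesis by blast
  next
    assume a: "- \<alpha> \<le> 0" and b: "- \<beta> \<le> 0"
    have "\<forall>k\<in>{1..d}. z k \<ge> 0"
    proof
      fix k assume k: "k \<in> {1..d}"
      show "z k \<ge> 0"
      proof (cases "k \<le> x1")
        case True
        then have "k \<in> A1" using k by (simp add: A1_def)
        then have "\<alpha> \<le> z k" using ale by blast
        then show ?thesis using a by linarith
      next
        case False
        then have "k \<in> A2" using k by (simp add: A2_def)
        then have "\<beta> \<le> z k" using ble by blast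
        then show ?thesis using b by linarith
      qed
    qed
    from unit_or_zero[OF zout this] I3 show ?thesis unfolding S_def by blast
  qed
qed


definition blk :: "nat \<Rightarrow> nat \<Rightarrow> int \<Rightarrow> int \<Rightarrow> nat \<Rightarrow> int" where
  "blk x1 d c1 c2 = (\<lambda>k. if 1 \<le> k \<and> k \<le> x1 then c1 else if x1 < k \<and> k \<le> d then c2 else 0)"

theorem theorem1p4:
  fixes r1 x1 d :: nat and q a1 a2 :: "nat \<Rightarrow> int"
    and a' b' :: "nat \<Rightarrow> nat \<Rightarrow> int"
  assumes "r1 \<ge> 2" and "x1 \<ge> 1"
    and "d = x1 + r1 - 1"
    and "q = (\<lambda>k. if 1 \<le> k \<and> k \<le> x1 then int r1
                  else if x1 < k \<and> k \<le> d then 1 + int r1 * int x1 else 0)"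
    and "a1 = (\<lambda>k. if 1 \<le> k \<and> k \<le> x1 then -1
                   else if x1 < k \<and> k \<le> d then - int x1 else 0)"
    and "a2 = (\<lambda>k. if x1 < k \<and> k \<le> d then -1 else 0)"
    and "a' (r1 + 1) = a1" and "a' (r1 + 2) = a2" and "a' (r1 + 3) = (\<lambda>k. 0)"
    and "\<And>i. 1 \<le> i \<Longrightarrow> i \<le> r1 \<Longrightarrow>
           a' i = (\<lambda>k. (int r1 - int i + 1) * a1 k + a2 k)"
    and "\<And>j. 1 \<le> j \<Longrightarrow> j \<le> d \<Longrightarrow> b' j = unit_vec (d - j + 1)"
  shows "{z :: nat \<Rightarrow> int. (\<forall>k. (k < 1 \<or> d < k) \<longrightarrow> z k = 0) \<and>
            (\<lambda>k. real_of_int (z k)) \<in>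
              fin_conv_hull ((\<lambda>v k. real_of_int (v k)) `
                 ((\<lambda>i. unit_vec i) ` {1..d} \<union> {(\<lambda>k. - q k)}))}
         = a' ` {1..r1 + 3} \<union> b' ` {1..d}"
proof -
  let ?L = "{z :: nat \<Rightarrow> int. (\<forall>k. (k < 1 \<or> d < k) \<longrightarrow> z k = 0) \<and>
            (\<lambda>k. real_of_int (z k)) \<in>
              fin_conv_hull ((\<lambda>v k. real_of_int (v k)) `
                 ((\<lambda>i. unit_vec i) ` {1..d} \<union> {(\<lambda>k. - q k)}))}"
  note r1 = assms(1) and x1 = assms(2) and d = assms(3)
  have xd: "x1 \<le> d" using r1 d by simp
  have qpos: "\<forall>k\<in>{1..d}. q k > 0" using assms(4) r1 by (auto simp: add_pos_nonneg)
  have qout: "\<forall>k. k \<notin> {1..d} \<longrightarrow> q k = 0" using assms(4) xd by auto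
  have cst: "(\<Sum>k\<in>A. f k) = real (card A) * c" if "\<forall>k\<in>A. f k = c" for A and f :: "nat \<Rightarrow> real" and c
    using that by simp
  have cd2: "real (card {x1<..d}) = real r1 - 1" using d r1 by (simp add: of_nat_diff)
  have sumq: "(\<Sum>k\<in>{1..d}. real_of_int (q k)) = real x1 * real r1 + (real r1 - 1) * (1 + real r1 * real x1)"
  proof -
    have "(\<Sum>k\<in>{1..d}. real_of_int (q k)) = (\<Sum>k\<in>{1..x1}. real_of_int (q k)) + (\<Sum>k\<in>{x1<..d}. real_of_int (q k))"
      by (rule sum_split2[OF xd])
    also have "(\<Sum>k\<in>{1..x1}. real_of_int (q k)) = real (card {1..x1}) * real r1"
      by (rule cst) (simp add: assms(4))
    also have "(\<Sum>k\<in>{x1<..d}. real_of_int (q k)) = real (card {x1<..d}) * (1 + real r1 * real x1)"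
      by (rule cst) (simp add: assms(4))
    finally show ?thesis using cd2 by simp
  qed
  have mem: "(z \<in> {z :: nat \<Rightarrow> int. (\<forall>k. (k < 1 \<or> d < k) \<longrightarrow> z k = 0) \<and>
            (\<lambda>k. real_of_int (z k)) \<in>
              fin_conv_hull ((\<lambda>v k. real_of_int (v k)) `
                 ((\<lambda>i. unit_vec i) ` {1..d} \<union> {(\<lambda>k. - q k)}))})
     \<longleftrightarrow> (\<forall>k. k \<notin> {1..d} \<longrightarrow> z k = 0) \<and> (\<exists>\<mu>::real. \<mu> \<ge> 0 \<and>
          (\<forall>k\<in>{1..x1}. real_of_int (z k) + \<mu> * real r1 \<ge> 0) \<and>
          (\<forall>k\<in>{x1<..d}. real_of_int (z k) + \<mu> * (1 + real r1 * real x1) \<ge> 0) \<and>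
          real_of_int (\<Sum>k\<in>{1..d}. z k) + \<mu> * (real r1 * (1 + real r1 * real x1)) = 1)" for z
  proof -
    have e1: "(\<forall>k. (k < 1 \<or> d < k) \<longrightarrow> z k = 0) \<longleftrightarrow> (\<forall>k. k \<notin> {1..d} \<longrightarrow> z k = 0)"
    proof -
      have "k \<notin> {1..d} \<longleftrightarrow> (k < 1 \<or> d < k)" for k by auto
      then show ?thesis by simp
    qed
    have e2: "(\<forall>k\<in>{1..d}. real_of_int (z k) + \<mu> * real_of_int (q k) \<ge> 0) \<longleftrightarrow>
          (\<forall>k\<in>{1..x1}. real_of_int (z k) + \<mu> * real r1 \<ge> 0) \<and>
          (\<forall>k\<in>{x1<..d}. real_of_int (z k) + \<mu> * (1 + real r1 * real x1) \<ge> 0)" for \<mu>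
      using xd by (auto simp: assms(4))
    have e3: "(\<Sum>k\<in>{1..d}. real_of_int (z k) + \<mu> * real_of_int (q k)) + \<mu> = 1 \<longleftrightarrow>
          real_of_int (\<Sum>k\<in>{1..d}. z k) + \<mu> * (real r1 * (1 + real r1 * real x1)) = 1" for \<mu>
    proof -
      have "(\<Sum>k\<in>{1..d}. real_of_int (z k) + \<mu> * real_of_int (q k)) + \<mu>
          = real_of_int (\<Sum>k\<in>{1..d}. z k) + \<mu> * (\<Sum>k\<in>{1..d}. real_of_int (q k)) + \<mu>"
        by (simp add: sum.distrib sum_distrib_left)
      also have "\<dots> = real_of_int (\<Sum>k\<in>{1..d}. z k) + \<mu> * (real r1 * (1 + real r1 * real x1))"
        unfolding sumq by (simp add: algebra_simps)
      finally show ?thesis by simp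
    qed
    show ?thesis
      using hull_char[OF qpos qout, of z] e1 e2 e3 by auto
  qed
  have blk_in: "blk x1 d c1 c2 \<in> {z :: nat \<Rightarrow> int. (\<forall>k. (k < 1 \<or> d < k) \<longrightarrow> z k = 0) \<and>
            (\<lambda>k. real_of_int (z k)) \<in>
              fin_conv_hull ((\<lambda>v k. real_of_int (v k)) `
                 ((\<lambda>i. unit_vec i) ` {1..d} \<union> {(\<lambda>k. - q k)}))}"
    if m0: "\<mu> \<ge> 0" and h1: "real_of_int c1 + \<mu> * real r1 \<ge> 0"
      and h2: "real_of_int c2 + \<mu> * (1 + real r1 * real x1) \<ge> 0"
      and h3: "real x1 * real_of_int c1 + (real r1 - 1) * real_of_int c2 + \<mu> * (real r1 * (1 + real r1 * real x1)) = 1"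
    for c1 c2 \<mu>
  proof -
    have s: "real_of_int (\<Sum>k\<in>{1..d}. blk x1 d c1 c2 k) = real x1 * real_of_int c1 + (real r1 - 1) * real_of_int c2"
    proof -
      have "real_of_int (\<Sum>k\<in>{1..d}. blk x1 d c1 c2 k) = (\<Sum>k\<in>{1..d}. real_of_int (blk x1 d c1 c2 k))" by simp
      also have "\<dots> = (\<Sum>k\<in>{1..x1}. real_of_int (blk x1 d c1 c2 k)) + (\<Sum>k\<in>{x1<..d}. real_of_int (blk x1 d c1 c2 k))"
        by (rule sum_split2[OF xd])
      also have "(\<Sum>k\<in>{1..x1}. real_of_int (blk x1 d c1 c2 k)) = real (card {1..x1}) * real_of_int c1"
        by (rule cst) (simp add: blk_def)
      also have "(\<Sum>k\<in>{x1<..d}. real_of_int (blk x1 d c1 c2 k)) = real (card {x1<..d}) * real_of_int c2"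
        by (rule cst) (simp add: blk_def)
      finally show ?thesis using cd2 by simp
    qed
    show ?thesis unfolding mem
    proof (intro conjI exI[of _ \<mu>])
      show "\<forall>k. k \<notin> {1..d} \<longrightarrow> blk x1 d c1 c2 k = 0" using xd by (auto simp: blk_def)
      show "\<forall>k\<in>{1..x1}. real_of_int (blk x1 d c1 c2 k) + \<mu> * real r1 \<ge> 0" using h1 by (simp add: blk_def)
      show "\<forall>k\<in>{x1<..d}. real_of_int (blk x1 d c1 c2 k) + \<mu> * (1 + real r1 * real x1) \<ge> 0" using h2 by (simp add: blk_def)
      show "real_of_int (\<Sum>k\<in>{1..d}. blk x1 d c1 c2 k) + \<mu> * (real r1 * (1 + real r1 * real x1)) = 1"
        using s h3 by simp
    qed (rule m0)
  qed

  have int_eq: "int r1 - int (r1 - m + 1) + 1 = int m" if "m \<in> {1..r1}" for m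
    using that by (simp add: of_nat_diff)
  show ?thesis
  proof (intro equalityI subsetI)
    fix z assume zL: "z \<in> ?L"
    from zL[unfolded mem] obtain \<mu> :: real where zout: "\<forall>k. k \<notin> {1..d} \<longrightarrow> z k = 0" and m0: "\<mu> \<ge> 0"
      and c1: "\<forall>k\<in>{1..x1}. real_of_int (z k) + \<mu> * real r1 \<ge> 0"
      and c2: "\<forall>k\<in>{x1<..d}. real_of_int (z k) + \<mu> * (1 + real r1 * real x1) \<ge> 0"
      and se: "real_of_int (\<Sum>k\<in>{1..d}. z k) + \<mu> * (real r1 * (1 + real r1 * real x1)) = 1"
      by blast
    from lattice_sub[OF r1 x1 d zout m0 c1 c2 se]
    show "z \<in> a' ` {1..r1 + 3} \<union> b' ` {1..d}"
    proof (elim disjE bexE)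
      fix m assume m: "m \<in> {1..r1}" and zm: "z = (\<lambda>k. if 1 \<le> k \<and> k \<le> x1 then - int m
              else if x1 < k \<and> k \<le> d then -(int m * int x1 + 1) else 0)"
      have "a' (r1 - m + 1) = (\<lambda>k. (int r1 - int (r1 - m + 1) + 1) * a1 k + a2 k)"
        using m by (intro assms(10)) auto
      also have "\<dots> = z" unfolding int_eq[OF m] zm assms(5,6) using xd by (auto simp: fun_eq_iff)
      finally have "a' (r1 - m + 1) = z" .
      moreover have "r1 - m + 1 \<in> {1..r1 + 3}" using m by auto
      ultimately show ?thesis by blast
    next
      assume "z = (\<lambda>k. if 1 \<le> k \<and> k \<le> x1 then -1 else if x1 < k \<and> k \<le> d then - int x1 else 0)"
      then have "a' (r1 + 1) = z" using assms(7,5) by simp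
      moreover have "r1 + 1 \<in> {1..r1 + 3}" by auto
      ultimately show ?thesis by blast
    next
      assume "z = (\<lambda>k. if x1 < k \<and> k \<le> d then -1 else 0)"
      then have "a' (r1 + 2) = z" using assms(8,6) by simp
      moreover have "r1 + 2 \<in> {1..r1 + 3}" by auto
      ultimately show ?thesis by blast
    next
      assume "z = (\<lambda>k. 0)"
      then have "a' (r1 + 3) = z" using assms(9) by simp
      moreover have "r1 + 3 \<in> {1..r1 + 3}" by auto
      ultimately show ?thesis by blast
    next
      fix j assume j: "j \<in> {1..d}" and zj: "z = unit_vec j"
      have "b' (d - j + 1) = unit_vec (d - (d - j + 1) + 1)" using j by (intro assms(11)) auto
      also have "d - (d - j + 1) + 1 = j" using j by auto
      finally have "b' (d - j + 1) = z" using zj by simp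
      moreover have "d - j + 1 \<in> {1..d}" using j by auto
      ultimately show ?thesis by blast
    qed
  next
    fix z assume "z \<in> a' ` {1..r1 + 3} \<union> b' ` {1..d}"
    then consider (A) i where "i \<in> {1..r1}" "z = a' i" | (B) "z = a' (r1 + 1)" | (C) "z = a' (r1 + 2)"
      | (D) "z = a' (r1 + 3)" | (E) j where "j \<in> {1..d}" "z = b' j"
      by (auto simp: le_Suc_eq numeral_3_eq_3 numeral_2_eq_2)
    then show "z \<in> ?L"
    proof cases
      case (A i)
      define m where "m = r1 - i + 1"
      have mi: "int r1 - int i + 1 = int m" using A(1) by (simp add: m_def of_nat_diff)
      have mr: "1 \<le> m" "m \<le> r1" using A(1) by (auto simp: m_def)
      have "z = blk x1 d (- int m) (-(int m * int x1 + 1))"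
        using A assms(10)[of i] unfolding mi assms(5,6) blk_def by (auto simp: fun_eq_iff)
      moreover have "blk x1 d (- int m) (-(int m * int x1 + 1)) \<in> ?L"
      proof (rule blk_in[where \<mu> = "(real m * real x1 + 1) / (1 + real r1 * real x1)"])
        have p: "1 + real r1 * real x1 > 0" by (simp add: add_pos_nonneg)
        show "(real m * real x1 + 1) / (1 + real r1 * real x1) \<ge> 0" using p by simp
        have "real m * (1 + real r1 * real x1) \<le> real r1 * (real m * real x1 + 1)"
          using mr by (simp add: algebra_simps)
        then show "real_of_int (- int m) + (real m * real x1 + 1) / (1 + real r1 * real x1) * real r1 \<ge> 0"
          using p by (simp add: field_simps)
        show "real_of_int (-(int m * int x1 + 1)) + (real m * real x1 + 1) / (1 + real r1 * real x1) * (1 + real r1 * real x1) \<ge> 0"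
          using p by simp
        show "real x1 * real_of_int (- int m) + (real r1 - 1) * real_of_int (-(int m * int x1 + 1))
           + (real m * real x1 + 1) / (1 + real r1 * real x1) * (real r1 * (1 + real r1 * real x1)) = 1"
          using p by (simp add: field_simps)
      qed
      ultimately show ?thesis by simp
    next
      case B
      have "z = blk x1 d (-1) (- int x1)" using B assms(7,5) by (simp add: blk_def)
      moreover have "blk x1 d (-1) (- int x1) \<in> ?L"
      proof (rule blk_in[where \<mu> = "1 / real r1"])
        have p: "real r1 > 0" using r1 by simp
        show "1 / real r1 \<ge> 0" by simp
        show "real_of_int (-1) + 1 / real r1 * real r1 \<ge> 0" using p by simp
        show "real_of_int (- int x1) + 1 / real r1 * (1 + real r1 * real x1) \<ge> 0"
          using p by (simp add: field_simps)
        show "real x1 * real_of_int (-1) + (real r1 - 1) * real_of_int (- int x1)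
           + 1 / real r1 * (real r1 * (1 + real r1 * real x1)) = 1"
          using p by (simp add: field_simps)
      qed
      ultimately show ?thesis by simp
    next
      case C
      have "z = blk x1 d 0 (-1)" using C assms(8,6) xd by (auto simp: blk_def fun_eq_iff)
      moreover have "blk x1 d 0 (-1) \<in> ?L"
      proof (rule blk_in[where \<mu> = "1 / (1 + real r1 * real x1)"])
        have p: "1 + real r1 * real x1 > 0" by (simp add: add_pos_nonneg)
        show "1 / (1 + real r1 * real x1) \<ge> 0" using p by simp
        show "real_of_int 0 + 1 / (1 + real r1 * real x1) * real r1 \<ge> 0" using p by simp
        show "real_of_int (-1) + 1 / (1 + real r1 * real x1) * (1 + real r1 * real x1) \<ge> 0"
          using p by simp
        show "real x1 * real_of_int 0 + (real r1 - 1) * real_of_int (-1)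
           + 1 / (1 + real r1 * real x1) * (real r1 * (1 + real r1 * real x1)) = 1"
          using p by (simp add: field_simps)
      qed
      ultimately show ?thesis by simp
    next
      case D
      have "z = blk x1 d 0 0" using D assms(9) by (simp add: blk_def fun_eq_iff)
      moreover have "blk x1 d 0 0 \<in> ?L"
      proof (rule blk_in[where \<mu> = "1 / (real r1 * (1 + real r1 * real x1))"])
        have p: "real r1 * (1 + real r1 * real x1) > 0" using r1 by (simp add: add_pos_nonneg)
        show "1 / (real r1 * (1 + real r1 * real x1)) \<ge> 0" using p by simp
        show "real_of_int 0 + 1 / (real r1 * (1 + real r1 * real x1)) * real r1 \<ge> 0" using p by simp
        show "real_of_int 0 + 1 / (real r1 * (1 + real r1 * real x1)) * (1 + real r1 * real x1) \<ge> 0"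
          using p by simp
        show "real x1 * real_of_int 0 + (real r1 - 1) * real_of_int 0
           + 1 / (real r1 * (1 + real r1 * real x1)) * (real r1 * (1 + real r1 * real x1)) = 1"
          using p r1 by (simp add: add_pos_nonneg ordered_comm_semiring_class.comm_mult_left_mono[of 0] add_nonneg_eq_0_iff)
      qed
      ultimately show ?thesis by simp
    next
      case (E j)
      define l where "l = d - j + 1"
      have l: "l \<in> {1..d}" using E(1) by (auto simp: l_def)
      have zl: "z = unit_vec l" using E assms(11)[of j] by (simp add: l_def)
      show ?thesis unfolding mem
      proof (intro conjI exI[of _ 0])
        show "\<forall>k. k \<notin> {1..d} \<longrightarrow> z k = 0" using l zl by (auto simp: unit_vec_def)
        show "\<forall>k\<in>{1..x1}. real_of_int (z k) + 0 * real r1 \<ge> 0" using zl by (simp add: unit_vec_def)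
        show "\<forall>k\<in>{x1<..d}. real_of_int (z k) + 0 * (1 + real r1 * real x1) \<ge> 0" using zl by (simp add: unit_vec_def)
        have "(\<Sum>k\<in>{1..d}. z k) = 1" using l zl by (simp add: unit_vec_def)
        then show "real_of_int (\<Sum>k\<in>{1..d}. z k) + 0 * (real r1 * (1 + real r1 * real x1)) = 1" by simp
      qed simp
    qed
  qed
qed

end
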